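(* Let $\mathcal{A}$ be a unital $C^*$-algebra with unit $I$, let $\eta:\mathcal{A}_+\to\mathcal{A}_+$ be a holomorphic map which is bounded on bounded subsets of $\mathcal{A}_+$, and let $V\in\mathcal{A}_+$. Let $b>\|(\operatorname{Re} V)^{-1}\|$ and $$R_b:=\{W\in\mathcal{A}_+\mid \|W\|<b\}.$$ Then the map $\mathcal{F}_V(W):=[V+\eta(W)]^{-1}$ is a well-defined bounded holomorphic map $R_b\to R_b$ which maps $R_b$ strictly into itself, i.e. there is $\epsilon>0$ such that the open norm ball of radius $\epsilon$ around $\mathcal{F}_V(W)$ is contained in $R_b$ for every $W\in R_b$. Moreover, for all $W\in R_b$, $$\operatorname{Re}\mathcal{F}_V(W)\geq \frac{1}{m_b^2\,\|(\operatorname{Re} V)^{-1}\|}\,I,\qquad m_b:=\|V\|+\sup\{\|\eta(W')\|\mid W'\in\mathcal{A}_+,\ \|W'\|\leq b\}.$$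
   Context: $\mathcal{A}_+:=\{W\in\mathcal{A}\mid \operatorname{Re} W\geq \varepsilon I \text{ for some } \varepsilon>0\}$, where $\operatorname{Re} W:=\frac12(W+W^* )$. "Bounded on bounded subsets" means $\sup\{\|\eta(W)\|\mid W\in\mathcal{A}_+,\ \|W\|\leq r\}<\infty$ for every $r>0$. For selfadjoint $A$, $A\geq B$ means the spectrum of $A-B$ lies in $[0,\infty)$. *)

theory Defs
  imports "HOL-Analysis.Analysis"
begin

class cstar_algebra = real_normed_algebra_1 + banach +
  fixes scaleC :: "complex \<Rightarrow> 'a \<Rightarrow> 'a"
    and adj :: "'a \<Rightarrow> 'a"
  assumes scaleC_add_left: "scaleC (a + b) x = scaleC a x + scaleC b x"
    and scaleC_add_right: "scaleC a (x + y) = scaleC a x + scaleC a y"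
    and scaleC_scaleC: "scaleC a (scaleC b x) = scaleC (a * b) x"
    and scaleC_one: "scaleC 1 x = x"
    and scaleC_of_real: "scaleC (complex_of_real r) x = scaleR r x"
    and norm_scaleC: "norm (scaleC a x) = cmod a * norm x"
    and scaleC_mult_left: "scaleC a (x * y) = scaleC a x * y"
    and scaleC_mult_right: "scaleC a (x * y) = x * scaleC a y"
    and adj_adj: "adj (adj x) = x"
    and adj_add: "adj (x + y) = adj x + adj y"
    and adj_scaleC: "adj (scaleC a x) = scaleC (cnj a) (adj x)"
    and adj_mult: "adj (x * y) = adj y * adj x"
    and cstar_identity: "norm (adj x * x) = norm x * norm x"

definition cinvertible :: "'a::cstar_algebra \<Rightarrow> bool" where
  "cinvertible a \<longleftrightarrow> (\<exists>b. b * a = 1 \<and> a * b = 1)"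

definition cinv :: "'a::cstar_algebra \<Rightarrow> 'a" where
  "cinv a = (THE b. b * a = 1 \<and> a * b = 1)"

definition cspectrum :: "'a::cstar_algebra \<Rightarrow> complex set" where
  "cspectrum a = {z. \<not> cinvertible (a - scaleC z 1)}"

definition cge :: "'a::cstar_algebra \<Rightarrow> 'a \<Rightarrow> bool" where
  "cge A B \<longleftrightarrow> cspectrum (A - B) \<subseteq> {z. Im z = 0 \<and> Re z \<ge> 0}"

definition cRe :: "'a::cstar_algebra \<Rightarrow> 'a" where
  "cRe W = scaleR (1/2) (W + adj W)"

definition cpos :: "'a::cstar_algebra set" where
  "cpos = {W. \<exists>\<epsilon>>0. cge (cRe W) (scaleR \<epsilon> 1)}"

definition cholomorphic_on :: "('a::cstar_algebra \<Rightarrow> 'a) \<Rightarrow> 'a set \<Rightarrow> bool" where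
  "cholomorphic_on f U \<longleftrightarrow>
     (\<forall>x\<in>U. \<exists>L. (f has_derivative L) (at x) \<and> (\<forall>c y. L (scaleC c y) = scaleC c (L y)))"

end

theory Submission
  imports Defs
begin


section \<open>Basic algebra\<close>

lemma scaleC_zero_left[simp]: "scaleC 0 (x::'a::cstar_algebra) = 0"
  using scaleC_of_real[of 0 x] by simp

lemma scaleC_zero_right[simp]: "scaleC c (0::'a::cstar_algebra) = 0"
  using scaleC_add_right[of c 0 0] by simp

lemma scaleC_minus_right: "scaleC c (- x) = - scaleC c (x::'a::cstar_algebra)"
  using scaleC_add_right[of c x "-x"] by (simp add: eq_neg_iff_add_eq_0 add.commute)

lemma scaleC_diff_right: "scaleC c (x - y) = scaleC c x - scaleC c (y::'a::cstar_algebra)"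
  using scaleC_add_right[of c x "-y"] by (simp add: scaleC_minus_right)

lemma scaleC_minus_left: "scaleC (- c) x = - scaleC c (x::'a::cstar_algebra)"
  using scaleC_add_left[of c "-c" x] by (simp add: eq_neg_iff_add_eq_0 add.commute)

lemma scaleC_diff_left: "scaleC (c - d) x = scaleC c x - scaleC d (x::'a::cstar_algebra)"
  using scaleC_add_left[of c "-d" x] by (simp add: scaleC_minus_left)

lemma scaleC_sum_right: "scaleC c (sum f A) = (\<Sum>i\<in>A. scaleC c (f i::'a::cstar_algebra))"
  by (induction A rule: infinite_finite_induct) (auto simp: scaleC_add_right)

lemma scaleC_sum_left: "scaleC (sum f A) x = (\<Sum>i\<in>A. scaleC (f i) (x::'a::cstar_algebra))"
  by (induction A rule: infinite_finite_induct) (auto simp: scaleC_add_left)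

lemma scaleC_mult_both: "scaleC a x * scaleC b y = scaleC (a*b) (x*(y::'a::cstar_algebra))"
  by (metis scaleC_mult_left scaleC_mult_right scaleC_scaleC)

lemma scaleC_power: "(scaleC c x)^n = scaleC (c^n) ((x::'a::cstar_algebra)^n)"
  by (induction n) (auto simp: scaleC_one scaleC_mult_both)

lemma scaleC_one_mult: "scaleC c 1 * x = scaleC c (x::'a::cstar_algebra)"
  by (metis mult_1_left scaleC_mult_left)

lemma mult_scaleC_one: "x * scaleC c 1 = scaleC c (x::'a::cstar_algebra)"
  by (metis mult_1_right scaleC_mult_right)

lemma scaleC_real: "scaleC (complex_of_real r) x = scaleR r (x::'a::cstar_algebra)"
  by (rule scaleC_of_real)

lemma norm_scaleC_one: "norm (scaleC c (1::'a::cstar_algebra)) = cmod c"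
  by (simp add: norm_scaleC)

lemma adj_zero[simp]: "adj (0::'a::cstar_algebra) = 0"
  using adj_add[of "0::'a" 0] by simp

lemma adj_minus: "adj (- x) = - adj (x::'a::cstar_algebra)"
  using adj_add[of x "-x"] by (simp add: eq_neg_iff_add_eq_0 add.commute)

lemma adj_diff: "adj (x - y) = adj x - adj (y::'a::cstar_algebra)"
  using adj_add[of x "-y"] by (simp add: adj_minus)

lemma adj_scaleR: "adj (scaleR r x) = scaleR r (adj (x::'a::cstar_algebra))"
  by (metis adj_scaleC complex_cnj_complex_of_real scaleC_of_real)

lemma adj_one[simp]: "adj (1::'a::cstar_algebra) = 1"
proof -
  have "adj (1::'a) = adj 1 * adj (adj 1)" by (metis adj_adj mult_1_right)
  also have "\<dots> = adj (adj 1 * 1)" by (rule adj_mult[symmetric])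
  also have "\<dots> = 1" by (simp add: adj_adj)
  finally show ?thesis .
qed

lemma adj_sum: "adj (sum f A) = (\<Sum>i\<in>A. adj (f i::'a::cstar_algebra))"
  by (induction A rule: infinite_finite_induct) (auto simp: adj_add)

lemma norm_adj_le: "norm (x::'a::cstar_algebra) \<le> norm (adj x)"
proof (cases "x = 0")
  case True then show ?thesis by simp
next
  case False
  have "norm x * norm x = norm (adj x * x)" by (simp add: cstar_identity)
  also have "\<dots> \<le> norm (adj x) * norm x" by (rule norm_mult_ineq)
  finally show ?thesis using False by simp
qed

lemma norm_adj[simp]: "norm (adj (x::'a::cstar_algebra)) = norm x"
  by (metis adj_adj norm_adj_le order_antisym)

lemma norm_cRe_le: "norm (cRe (x::'a::cstar_algebra)) \<le> norm x"
proof -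
  have "norm (cRe x) = (1/2) * norm (x + adj x)" by (simp add: cRe_def)
  also have "\<dots> \<le> (1/2) * (norm x + norm (adj x))" by (intro mult_left_mono norm_triangle_ineq) auto
  finally show ?thesis by simp
qed

lemma adj_cRe: "adj (cRe x) = cRe (x::'a::cstar_algebra)"
  by (simp add: cRe_def adj_scaleR adj_add adj_adj add.commute)

lemma cRe_add: "cRe (x + y) = cRe x + cRe (y::'a::cstar_algebra)"
  by (simp add: cRe_def adj_add scaleR_add_right algebra_simps)

lemma cRe_diff: "cRe (x - y) = cRe x - cRe (y::'a::cstar_algebra)"
  by (simp add: cRe_def adj_diff scaleR_diff_right algebra_simps)

lemma cRe_scaleR: "cRe (scaleR r x) = scaleR r (cRe (x::'a::cstar_algebra))"
  by (simp add: cRe_def adj_scaleR scaleR_add_right)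

lemma cRe_one[simp]: "cRe (1::'a::cstar_algebra) = 1"
  by (simp add: cRe_def scaleR_add_right[symmetric] flip: scaleR_2)

section \<open>Inverses\<close>

lemma cinv_unique: "b * a = 1 \<Longrightarrow> a * b = 1 \<Longrightarrow> cinv a = (b::'a::cstar_algebra)"
  unfolding cinv_def
proof (rule the_equality)
  fix c assume "b * a = 1" "a * b = 1" "c * a = 1 \<and> a * c = 1"
  then show "c = b" by (metis mult.assoc mult_1_left mult_1_right)
qed auto

lemma cinvertibleI: "b * a = 1 \<Longrightarrow> a * b = 1 \<Longrightarrow> cinvertible (a::'a::cstar_algebra)"
  unfolding cinvertible_def by blast

lemma cinv_left: "cinvertible a \<Longrightarrow> cinv a * a = (1::'a::cstar_algebra)"
  unfolding cinvertible_def using cinv_unique by metis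

lemma cinv_right: "cinvertible a \<Longrightarrow> a * cinv a = (1::'a::cstar_algebra)"
  unfolding cinvertible_def using cinv_unique by metis

lemma cinv_one[simp]: "cinv (1::'a::cstar_algebra) = 1" and cinvertible_one[simp]: "cinvertible (1::'a)"
  by (auto intro: cinv_unique cinvertibleI[of 1])

lemma cinvertible_mult:
  assumes "cinvertible a" "cinvertible (b::'a::cstar_algebra)"
  shows "cinvertible (a * b)" "cinv (a * b) = cinv b * cinv a"
proof -
  have 1: "(cinv b * cinv a) * (a * b) = 1"
    by (metis assms cinv_left mult.assoc mult_1_left)
  have 2: "(a * b) * (cinv b * cinv a) = 1"
    by (metis assms cinv_right mult.assoc mult_1_left)
  show "cinvertible (a * b)" by (rule cinvertibleI[OF 1 2])
  show "cinv (a * b) = cinv b * cinv a" by (rule cinv_unique[OF 1 2])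
qed

lemma cinvertible_adj:
  assumes "cinvertible (a::'a::cstar_algebra)"
  shows "cinvertible (adj a)" "cinv (adj a) = adj (cinv a)"
proof -
  have 1: "adj (cinv a) * adj a = 1" by (metis adj_mult adj_one assms cinv_right)
  have 2: "adj a * adj (cinv a) = 1" by (metis adj_mult adj_one assms cinv_left)
  show "cinvertible (adj a)" by (rule cinvertibleI[OF 1 2])
  show "cinv (adj a) = adj (cinv a)" by (rule cinv_unique[OF 1 2])
qed

lemma cinvertible_scaleC:
  assumes "cinvertible (a::'a::cstar_algebra)" "c \<noteq> 0"
  shows "cinvertible (scaleC c a)"
proof (rule cinvertibleI)
  show "scaleC (inverse c) (cinv a) * scaleC c a = 1"
    using assms by (simp add: scaleC_mult_both cinv_left scaleC_one)
  show "scaleC c a * scaleC (inverse c) (cinv a) = 1"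
    using assms by (simp add: scaleC_mult_both cinv_right scaleC_one)
qed

lemma right_inv_eq:
  assumes "cinvertible (a::'a::cstar_algebra)" "a * g = 1"
  shows "g = cinv a"
  by (metis assms cinv_left mult.assoc mult_1_left mult_1_right)

lemma cinv_nonzero: "cinvertible (a::'a::cstar_algebra) \<Longrightarrow> cinv a \<noteq> 0"
  using cinv_left by fastforce

lemma norm_cinv_pos: "cinvertible (a::'a::cstar_algebra) \<Longrightarrow> norm (cinv a) > 0"
  using cinv_nonzero by auto

section \<open>Neumann series\<close>

lemma neumann:
  fixes h :: "'a::cstar_algebra"
  assumes "norm h < 1"
  shows "cinvertible (1 - h)" "norm (cinv (1 - h)) \<le> 1 / (1 - norm h)"
proof -
  have summ: "summable (\<lambda>n. h ^ n)"
    by (rule summable_comparison_test'[of "\<lambda>n. norm h ^ n" 0])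
       (auto simp: assms norm_power_ineq summable_geometric)
  define S where "S = suminf (\<lambda>n. h ^ n)"
  have tel: "(\<lambda>n. h ^ n - h ^ Suc n) sums (1 - 0)"
    using telescope_sums'[OF LIMSEQ_power_zero[OF assms]] by simp
  have "(\<lambda>n. (1 - h) * h ^ n) sums ((1 - h) * S)"
    unfolding S_def by (rule sums_mult) (use summ in \<open>simp add: summable_sums\<close>)
  moreover have "(\<lambda>n. (1 - h) * h ^ n) = (\<lambda>n. h ^ n - h ^ Suc n)"
    by (simp add: algebra_simps)
  ultimately have r: "(1 - h) * S = 1" using tel sums_unique2 by fastforce
  have "(\<lambda>n. h ^ n * (1 - h)) sums (S * (1 - h))"
    unfolding S_def by (rule sums_mult2) (use summ in \<open>simp add: summable_sums\<close>)
  moreover have "(\<lambda>n. h ^ n * (1 - h)) = (\<lambda>n. h ^ n - h ^ Suc n)"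
    by (simp add: algebra_simps power_commutes)
  ultimately have l: "S * (1 - h) = 1" using tel sums_unique2 by fastforce
  show inv: "cinvertible (1 - h)" by (rule cinvertibleI[OF l r])
  have Seq: "cinv (1 - h) = S" by (rule cinv_unique[OF l r])
  have "S = 1 + h * S" using r by (simp add: algebra_simps)
  then have "norm S \<le> 1 + norm h * norm S"
    by (metis norm_mult_ineq norm_one norm_triangle_le add_left_mono)
  then have "norm S * (1 - norm h) \<le> 1" by (simp add: algebra_simps)
  then show "norm (cinv (1 - h)) \<le> 1 / (1 - norm h)"
    using assms by (simp add: Seq field_simps)
qed



lemma inv_perturb:
  fixes a b :: "'a::cstar_algebra"
  assumes a: "cinvertible a" and q: "norm (b - a) * norm (cinv a) < 1"
  shows "cinvertible b" "norm (cinv b) \<le> norm (cinv a) / (1 - norm (b - a) * norm (cinv a))"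
proof -
  define h where "h = cinv a * (a - b)"
  have hn: "norm h \<le> norm (b - a) * norm (cinv a)"
    unfolding h_def by (metis mult.commute norm_minus_commute norm_mult_ineq)
  then have h1: "norm h < 1" using q by linarith
  have beq: "b = a * (1 - h)"
    unfolding h_def by (simp add: algebra_simps mult.assoc[symmetric] cinv_right[OF a])
  have i1: "cinvertible (1 - h)" and n1: "norm (cinv (1 - h)) \<le> 1 / (1 - norm h)"
    using neumann[OF h1] by auto
  show "cinvertible b" using beq cinvertible_mult[OF a i1] by simp
  have "cinv b = cinv (1 - h) * cinv a" using beq cinvertible_mult[OF a i1] by simp
  then have "norm (cinv b) \<le> norm (cinv (1 - h)) * norm (cinv a)"
    by (simp add: norm_mult_ineq)
  also have "\<dots> \<le> 1 / (1 - norm h) * norm (cinv a)"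
    by (intro mult_right_mono n1) auto
  also have "\<dots> \<le> 1 / (1 - norm (b - a) * norm (cinv a)) * norm (cinv a)"
    using hn q h1 by (intro mult_right_mono divide_left_mono) (auto intro!: mult_pos_pos)
  finally show "norm (cinv b) \<le> norm (cinv a) / (1 - norm (b - a) * norm (cinv a))" by simp
qed

lemma cinv_diff:
  fixes a b :: "'a::cstar_algebra"
  assumes "cinvertible a" "cinvertible b"
  shows "cinv b - cinv a = cinv b * (a - b) * cinv a"
  using assms by (simp add: algebra_simps cinv_left cinv_right mult.assoc)

lemma inv_close:
  fixes a b :: "'a::cstar_algebra"
  assumes a: "cinvertible a" and q: "norm (b - a) * norm (cinv a) \<le> 1/2"
  shows "cinvertible b" "norm (cinv b) \<le> 2 * norm (cinv a)"
    "norm (cinv b - cinv a) \<le> 2 * norm (cinv a)^2 * norm (b - a)"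
proof -
  have q': "norm (b - a) * norm (cinv a) < 1" using q by linarith
  show b: "cinvertible b" using inv_perturb[OF a q'] by auto
  have "norm (cinv b) \<le> norm (cinv a) / (1 - norm (b - a) * norm (cinv a))"
    using inv_perturb[OF a q'] by auto
  also have "\<dots> \<le> norm (cinv a) / (1/2)"
    using q by (intro divide_left_mono) auto
  finally show nb: "norm (cinv b) \<le> 2 * norm (cinv a)" by simp
  have "norm (cinv b - cinv a) = norm (cinv b * (a - b) * cinv a)"
    by (simp add: cinv_diff[OF a b])
  also have "\<dots> \<le> norm (cinv b * (a - b)) * norm (cinv a)" by (rule norm_mult_ineq)
  also have "\<dots> \<le> norm (cinv b) * norm (a - b) * norm (cinv a)"
    by (intro mult_right_mono norm_mult_ineq norm_ge_zero)
  also have "\<dots> = norm (cinv b) * norm (b - a) * norm (cinv a)"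
    by (simp add: norm_minus_commute)
  also have "\<dots> \<le> (2 * norm (cinv a)) * norm (b - a) * norm (cinv a)"
    by (intro mult_right_mono nb norm_ge_zero)
  finally show "norm (cinv b - cinv a) \<le> 2 * norm (cinv a)^2 * norm (b - a)"
    by (simp add: power2_eq_square algebra_simps)
qed

lemma isCont_cinv:
  fixes a :: "'a::cstar_algebra"
  assumes a: "cinvertible a"
  shows "isCont cinv a"
proof -
  define C where "C = norm (cinv a)"
  have C: "C > 0" unfolding C_def using norm_cinv_pos[OF a] .
  have ev: "eventually (\<lambda>x. norm (cinv x - cinv a) \<le> 2 * C^2 * norm (x - a)) (at a)"
    unfolding eventually_at
  proof (intro exI[of _ "1/(2*C)"] conjI ballI impI)
    show "0 < 1/(2*C)" using C by simp
    fix x assume "x \<in> UNIV" "x \<noteq> a \<and> dist x a < 1 / (2 * C)"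
    then have "norm (x - a) * C \<le> 1/2" using C by (simp add: dist_norm field_simps)
    then show "norm (cinv x - cinv a) \<le> 2 * C^2 * norm (x - a)"
      using inv_close(3)[OF a] unfolding C_def by auto
  qed
  have lim: "((\<lambda>x. 2 * C^2 * norm (x - a)) \<longlongrightarrow> 0) (at a)"
    by (intro tendsto_mult_right_zero tendsto_norm_zero) (auto intro: LIM_zero tendsto_ident_at)
  have "((\<lambda>x. cinv x - cinv a) \<longlongrightarrow> 0) (at a)"
    by (rule Lim_null_comparison[OF ev lim])
  then show ?thesis unfolding isCont_def by (simp add: Lim_null[symmetric])
qed

lemma spec_bound:
  fixes x :: "'a::cstar_algebra"
  assumes "cmod z > norm x"
  shows "cinvertible (x - scaleC z 1)"
proof -
  have z: "z \<noteq> 0" using assms by auto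
  have "norm (scaleC (1/z) x) < 1"
    using assms z by (simp add: norm_scaleC norm_divide field_simps)
  then have "cinvertible (1 - scaleC (1/z) x)" by (rule neumann)
  then have "cinvertible (scaleC (-z) (1 - scaleC (1/z) x))"
    using z by (intro cinvertible_scaleC) auto
  moreover have "scaleC (-z) (1 - scaleC (1/z) x) = x - scaleC z 1"
    using z by (simp add: scaleC_diff_right scaleC_scaleC scaleC_minus_left scaleC_one)
  ultimately show ?thesis by simp
qed



lemma real_spec:
  fixes h :: "'a::cstar_algebra"
  assumes sa: "adj h = h" and z: "Im z \<noteq> 0"
  shows "cinvertible (h - scaleC z 1)"
proof (rule ccontr)
  assume ni: "\<not> cinvertible (h - scaleC z 1)"
  define t where "t = (norm h ^ 2 + 1) / (2 * Im z)"
  define k where "k = h + scaleC (\<i> * of_real t) 1"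
  have "k - scaleC (z + \<i> * of_real t) 1 = h - scaleC z 1"
    unfolding k_def by (simp add: scaleC_add_left)
  then have "\<not> cinvertible (k - scaleC (z + \<i> * of_real t) 1)" using ni by simp
  then have le1: "cmod (z + \<i> * of_real t) \<le> norm k" using spec_bound by force
  have adjk: "adj k = h + scaleC (- (\<i> * of_real t)) 1"
    unfolding k_def by (simp add: adj_add adj_scaleC sa)
  define c where "c = \<i> * complex_of_real t"
  have "adj k * k = (h + scaleC (- c) 1) * (h + scaleC c 1)"
    using adjk k_def c_def by simp
  also have "\<dots> = h * h + (scaleC c h + scaleC (-c) h) + scaleC (-c * c) 1"
    by (simp add: distrib_left distrib_right scaleC_one_mult mult_scaleC_one scaleC_mult_both
        scaleC_add_right scaleC_scaleC)
  also have "scaleC c h + scaleC (-c) h = 0" by (simp add: scaleC_minus_left)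
  also have "-c * c = complex_of_real (t^2)" unfolding c_def by (simp add: power2_eq_square algebra_simps)
  finally have akk: "adj k * k = h * h + scaleR (t^2) 1" by (simp only: scaleC_real add_0_right)
  have ci: "norm (adj k * k) = norm k * norm k" by (rule cstar_identity)
  have "norm k * norm k = norm (h * h + scaleR (t^2) 1)" using ci unfolding akk by (rule sym)
  also have "\<dots> \<le> norm h * norm h + t^2"
    by (rule order_trans[OF norm_triangle_ineq]) (simp add: norm_mult_ineq add_mono)
  finally have k2: "norm k ^ 2 \<le> norm h ^ 2 + t^2" by (simp add: power2_eq_square)
  have c2: "cmod (z + \<i> * of_real t) ^ 2 = Re z ^ 2 + (Im z + t)^2"
    by (simp add: cmod_power2)
  have e1: "cmod (z + \<i> * of_real t) ^ 2 \<le> norm k ^ 2"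
    using le1 by (intro power_mono) auto
  have ex: "(Im z + t)^2 = Im z ^ 2 + 2 * Im z * t + t^2" by (simp add: power2_eq_square algebra_simps)
  have tt: "2 * Im z * t = norm h ^ 2 + 1" unfolding t_def using z by simp
  have "Re z ^ 2 \<ge> 0" "Im z ^ 2 \<ge> 0" by auto
  then show False using c2 e1 k2 ex tt by linarith
qed

definition pos :: "'a::cstar_algebra \<Rightarrow> bool" where
  "pos x \<longleftrightarrow> cspectrum x \<subseteq> {z. Im z = 0 \<and> Re z \<ge> 0}"

lemma cge_pos: "cge A B \<longleftrightarrow> pos (A - B)"
  by (simp add: cge_def pos_def)

lemma posSA:
  fixes h :: "'a::cstar_algebra"
  assumes sa: "adj h = h"
  shows "pos h \<longleftrightarrow> (\<forall>s>0. cinvertible (h + scaleR s 1))"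
proof
  assume p: "pos h"
  show "\<forall>s>0. cinvertible (h + scaleR s 1)"
  proof (intro allI impI)
    fix s :: real assume "s > 0"
    then have "complex_of_real (-s) \<notin> cspectrum h" using p unfolding pos_def by auto
    then show "cinvertible (h + scaleR s 1)" unfolding cspectrum_def by (simp add: scaleC_minus_left scaleC_real)
  qed
next
  assume H: "\<forall>s>0. cinvertible (h + scaleR s 1)"
  show "pos h" unfolding pos_def cspectrum_def
  proof (intro subsetI CollectI)
    fix z assume "z \<in> {z. \<not> cinvertible (h - scaleC z 1)}"
    then have ni: "\<not> cinvertible (h - scaleC z 1)" by simp
    then have im: "Im z = 0" using real_spec[OF sa] by blast
    then have zr: "z = complex_of_real (Re z)" by (simp add: complex_eq_iff)
    have "Re z \<ge> 0"
    proof (rule ccontr)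
      assume "\<not> Re z \<ge> 0"
      then have "cinvertible (h + scaleR (- Re z) 1)" using H[rule_format, of "- Re z"] by simp
      moreover have "h + scaleR (- Re z) 1 = h - scaleC z 1"
        by (subst zr) (simp add: scaleC_real)
      ultimately show False using ni by simp
    qed
    then show "Im z = 0 \<and> 0 \<le> Re z" using im by simp
  qed
qed



lemma geom_mult: "(\<Sum>i<n. (x::'a::ring_1)^i) * (1 - x) = 1 - x^n"
proof (induction n)
  case (Suc n)
  have "(\<Sum>i<Suc n. x^i) * (1 - x) = (\<Sum>i<n. x^i) * (1 - x) + x^n * (1 - x)"
    by (simp add: distrib_right)
  also have "\<dots> = 1 - x^Suc n" using Suc by (simp add: right_diff_distrib power_Suc2 power_commutes)
  finally show ?case .
qed simp

lemma scaleC_cont: "isCont (\<lambda>\<mu>. scaleC \<mu> (x::'a::cstar_algebra)) \<mu>0"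
proof -
  have "bounded_linear (\<lambda>\<mu>. scaleC \<mu> x)"
  proof (rule bounded_linear_intro[where K = "norm x"])
    show "scaleC (a + b) x = scaleC a x + scaleC b x" for a b by (rule scaleC_add_left)
    show "scaleC (scaleR r a) x = scaleR r (scaleC a x)" for r a
      by (simp add: scaleR_conv_of_real scaleC_scaleC[symmetric] scaleC_real)
    show "norm (scaleC a x) \<le> norm a * norm x" for a by (simp add: norm_scaleC)
  qed
  then show ?thesis by (rule bounded_linear.isCont[OF _ continuous_ident])
qed

lemma g_bound1:
  fixes y g :: "'a::cstar_algebra"
  assumes "(1 - y) * g = 1" "norm (g - 1) \<le> 1/4"
  shows "norm y \<le> 1/3"
proof -
  have "y = (1 - y) * (g - 1)" using assms(1) by (simp add: algebra_simps)
  then have "norm y \<le> norm (1 - y) * norm (g - 1)" by (metis norm_mult_ineq)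
  also have "\<dots> \<le> (1 + norm y) * (1/4)"
  proof (rule mult_mono)
    show "norm (1 - y) \<le> 1 + norm y" using norm_triangle_ineq4[of 1 y] by simp
  qed (use assms in auto)
  finally show ?thesis by simp
qed

lemma g_bound2:
  fixes y g :: "'a::cstar_algebra"
  assumes "(1 - y) * g = 1" "norm y \<le> 1/9"
  shows "norm (g - 1) \<le> 1/8"
proof -
  have e: "g - 1 = y * g" using assms(1) by (simp add: algebra_simps)
  then have "g = 1 + y * g" by (simp add: algebra_simps)
  then have "norm g \<le> 1 + norm (y * g)" by (metis norm_one norm_triangle_ineq)
  also have "norm (y * g) \<le> norm y * norm g" by (rule norm_mult_ineq)
  finally have "norm g \<le> 1 + norm y * norm g" by simp
  also have "norm y * norm g \<le> (1/9) * norm g" using assms(2) by (intro mult_right_mono) auto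
  finally have ng: "norm g \<le> 9/8" by simp
  have "norm (g - 1) \<le> norm y * norm g" unfolding e by (rule norm_mult_ineq)
  also have "\<dots> \<le> (1/9) * (9/8)" using assms(2) ng by (intro mult_mono) auto
  finally show ?thesis by simp
qed

definition rootu :: "nat \<Rightarrow> nat \<Rightarrow> complex" where
  "rootu n k = exp (2 * of_real pi * \<i> * of_nat k / of_nat n)"

lemma rootu_norm[simp]: "cmod (rootu n k) = 1"
  by (simp add: rootu_def)

lemma rootu_pow: "rootu n k ^ j = rootu n (k * j)"
  unfolding rootu_def by (simp add: exp_of_nat_mult[symmetric] algebra_simps)

lemma rootu_pow_n: "n \<noteq> 0 \<Longrightarrow> rootu n k ^ n = 1"
  unfolding rootu_def by (rule complex_root_unity)

lemma rootu_sum: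
  assumes "0 < j" "j < n"
  shows "(\<Sum>k<n. rootu n k ^ j) = 0"
proof -
  have "rootu n k ^ j = rootu n j ^ k" for k by (simp add: rootu_pow mult.commute)
  then have "(\<Sum>k<n. rootu n k ^ j) = (\<Sum>k<n. rootu n j ^ k)" by simp
  also have "rootu n j \<noteq> 1"
    using complex_root_unity_eq_1[of n j] assms unfolding rootu_def
    by (auto dest: dvd_imp_le)
  then have "(\<Sum>k<n. rootu n j ^ k) = (1 - rootu n j ^ n) / (1 - rootu n j)"
    by (simp add: sum_gp_strict)
  also have "\<dots> = 0" using rootu_pow_n[of n j] assms by simp
  finally show ?thesis .
qed

lemma rootu_sum0: "(\<Sum>k<n. rootu n k ^ 0) = of_nat n" by simp



lemma gelfand_core:
  fixes x :: "'a::cstar_algebra" and R :: real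
  assumes R: "R > 0" and inv: "\<And>\<mu>. cmod \<mu> \<le> R \<Longrightarrow> cinvertible (1 - scaleC \<mu> x)"
  shows "\<exists>N. \<forall>n\<ge>N. norm ((scaleR R x) ^ n) \<le> 1"
proof -
  define f where "f \<mu> = cinv (1 - scaleC \<mu> x)" for \<mu>
  have cont: "continuous_on (cball 0 R) f"
    unfolding f_def
  proof (intro continuous_at_imp_continuous_on ballI)
    fix \<mu> :: complex assume "\<mu> \<in> cball 0 R"
    then have "cinvertible (1 - scaleC \<mu> x)" using inv by auto
    then show "isCont (\<lambda>\<mu>. cinv (1 - scaleC \<mu> x)) \<mu>"
      by (intro isCont_o2[OF _ isCont_cinv]) (auto intro!: continuous_intros scaleC_cont)
  qed
  have uc: "uniformly_continuous_on (cball 0 R) f"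
    by (rule compact_uniformly_continuous[OF cont compact_cball])
  obtain d where d: "d > 0"
    and dd: "\<And>a b. a \<in> cball 0 R \<Longrightarrow> b \<in> cball 0 R \<Longrightarrow> dist b a < d \<Longrightarrow> dist (f b) (f a) < 1/8"
    using uc[unfolded uniformly_continuous_on_def, rule_format, of "1/8"] by auto
  define g where "g n r = scaleR (1 / real n) (\<Sum>k<n. f (rootu n k * of_real r))" for n r
  have ident: "(1 - (scaleR r x)^n) * g n r = 1" if n: "n > 0" and r: "0 \<le> r" "r \<le> R" for n r
  proof -
    define a where "a = scaleR r x"
    have sc: "scaleC (rootu n k * of_real r) x = scaleC (rootu n k) a" for k
      unfolding a_def by (simp add: scaleC_scaleC[symmetric] scaleC_real)
    have invk: "cinvertible (1 - scaleC (rootu n k) a)" for k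
      using inv[of "rootu n k * of_real r"] r unfolding sc by (simp add: norm_mult)
    have fk: "(1 - a^n) * f (rootu n k * of_real r) = (\<Sum>j<n. scaleC (rootu n k ^ j) (a^j))" for k
    proof -
      have "1 - a^n = 1 - (scaleC (rootu n k) a)^n"
        using rootu_pow_n[of n k] n by (simp add: scaleC_power scaleC_one)
      also have "\<dots> = (\<Sum>j<n. (scaleC (rootu n k) a)^j) * (1 - scaleC (rootu n k) a)"
        by (rule geom_mult[symmetric])
      finally have "(1 - a^n) * f (rootu n k * of_real r) =
          (\<Sum>j<n. (scaleC (rootu n k) a)^j) * ((1 - scaleC (rootu n k) a) * cinv (1 - scaleC (rootu n k) a))"
        unfolding f_def sc by (simp add: mult.assoc)
      then show ?thesis using cinv_right[OF invk] by (simp add: scaleC_power)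
    qed
    have "(1 - a^n) * g n r = scaleR (1/real n) (\<Sum>k<n. (1 - a^n) * f (rootu n k * of_real r))"
      unfolding g_def by (simp add: sum_distrib_left mult_scaleR_right)
    also have "\<dots> = scaleR (1/real n) (\<Sum>k<n. \<Sum>j<n. scaleC (rootu n k ^ j) (a^j))"
      using fk by simp
    also have "(\<Sum>k<n. \<Sum>j<n. scaleC (rootu n k ^ j) (a^j)) = (\<Sum>j<n. \<Sum>k<n. scaleC (rootu n k ^ j) (a^j))"
      by (rule sum.swap)
    also have "\<dots> = (\<Sum>j<n. scaleC (\<Sum>k<n. rootu n k ^ j) (a^j))"
      by (simp add: scaleC_sum_left)
    also have "\<dots> = (\<Sum>j<n. if j = 0 then scaleC (of_nat n) 1 else 0)"
      by (rule sum.cong) (auto simp: rootu_sum)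
    also have "\<dots> = scaleC (of_nat n) 1" using n by simp
    also have "scaleC (of_nat n) (1::'a) = scaleR (real n) 1"
      using scaleC_real[of "real n" "1::'a"] by simp
    finally show ?thesis using n unfolding a_def by simp
  qed
  have eqc: "norm (g n r - g n r') < 1/8"
    if n: "n > 0" and r: "0 \<le> r" "r \<le> R" "0 \<le> r'" "r' \<le> R" "\<bar>r - r'\<bar> < d" for n r r'
  proof -
    have "g n r - g n r' = scaleR (1 / real n) (\<Sum>k<n. f (rootu n k * of_real r) - f (rootu n k * of_real r'))"
      unfolding g_def by (simp add: sum_subtractf scaleR_diff_right)
    then have "norm (g n r - g n r') = (1 / real n) * norm (\<Sum>k<n. f (rootu n k * of_real r) - f (rootu n k * of_real r'))"
      by simp
    also have "\<dots> \<le> (1 / real n) * (\<Sum>k<n. norm (f (rootu n k * of_real r) - f (rootu n k * of_real r')))"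
      by (intro mult_left_mono norm_sum) auto
    also have "\<dots> < (1 / real n) * (\<Sum>k<n. 1/8)"
    proof (intro mult_strict_left_mono sum_strict_mono)
      fix k assume "k \<in> {..<n}"
      have "dist (f (rootu n k * of_real r)) (f (rootu n k * of_real r')) < 1/8"
      proof (rule dd)
        show "rootu n k * of_real r' \<in> cball 0 R" using r by (simp add: norm_mult)
        show "rootu n k * of_real r \<in> cball 0 R" using r by (simp add: norm_mult)
        have "rootu n k * of_real r - rootu n k * of_real r' = rootu n k * of_real (r - r')"
          by (simp add: algebra_simps)
        then show "dist (rootu n k * of_real r) (rootu n k * of_real r') < d"
          using r by (simp add: dist_norm norm_mult flip: of_real_diff)
      qed
      then show "norm (f (rootu n k * of_real r) - f (rootu n k * of_real r')) < 1/8"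
        by (simp add: dist_norm)
    qed (use n in auto)
    also have "\<dots> = 1/8" using n by simp
    finally show ?thesis .
  qed
  define P where "P r \<longleftrightarrow> (\<exists>N. \<forall>n\<ge>N. norm ((scaleR r x)^n) \<le> 1)" for r
  have P0: "P 0" unfolding P_def by (intro exI[of _ 1]) (auto simp: power_0_left)
  have step: "P (min R (r + d/2))" if r: "0 \<le> r" "r \<le> R" and Pr: "P r" for r
  proof -
    define r' where "r' = min R (r + d/2)"
    define r2 where "r2 = max 0 (r - d/4)"
    have b: "0 \<le> r2" "r2 \<le> R" "0 \<le> r'" "r' \<le> R" "\<bar>r' - r2\<bar> < d"
      using r d R unfolding r'_def r2_def by auto
    have small: "\<exists>N2. \<forall>n\<ge>N2. norm ((scaleR r2 x)^n) \<le> 1/9"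
    proof (cases "r2 = 0")
      case True then show ?thesis by (intro exI[of _ 1]) (auto simp: power_0_left)
    next
      case False
      then have r2e: "r2 = r - d/4" and rpos: "r > 0" using d unfolding r2_def by auto
      obtain N where N: "\<And>n. n \<ge> N \<Longrightarrow> norm ((scaleR r x)^n) \<le> 1" using Pr unfolding P_def by auto
      define q where "q = r2 / r"
      have q: "0 \<le> q" "q < 1" using b rpos d r2e unfolding q_def by auto
      obtain M where M: "q ^ M < 1/9" using real_arch_pow_inv[of "1/9" q] q by auto
      show ?thesis
      proof (intro exI[of _ "max N M"] allI impI)
        fix n assume n: "max N M \<le> n"
        have "scaleR r2 x = scaleR q (scaleR r x)" unfolding q_def using rpos by simp
        then have "(scaleR r2 x)^n = scaleR (q^n) ((scaleR r x)^n)"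
          by (simp only: scaleR_power)
        then have "norm ((scaleR r2 x)^n) = q^n * norm ((scaleR r x)^n)"
          by (simp only: norm_scaleR abs_of_nonneg[OF zero_le_power[OF q(1)]])
        also have "\<dots> \<le> q^n * 1" using N[of n] n q by (intro mult_left_mono) auto
        also have "\<dots> \<le> q^M" using power_decreasing[of M n q] n q by simp
        finally show "norm ((scaleR r2 x)^n) \<le> 1/9" using M by simp
      qed
    qed
    then obtain N2 where N2: "\<And>n. n \<ge> N2 \<Longrightarrow> norm ((scaleR r2 x)^n) \<le> 1/9" by auto
    show ?thesis unfolding r'_def[symmetric] P_def
    proof (intro exI[of _ "max 1 N2"] allI impI)
      fix n assume n: "max 1 N2 \<le> n"
      then have n0: "n > 0" by auto
      have a1: "norm (g n r2 - 1) \<le> 1/8"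
        using g_bound2[OF ident[OF n0 b(1,2)] N2] n by auto
      have a2: "norm (g n r' - g n r2) < 1/8" using eqc[OF n0 b(3,4,1,2,5)] .
      have "norm (g n r' - 1) \<le> norm (g n r' - g n r2) + norm (g n r2 - 1)"
        using norm_triangle_ineq[of "g n r' - g n r2" "g n r2 - 1"] by simp
      then have "norm (g n r' - 1) \<le> 1/4" using a1 a2 by simp
      then have "norm ((scaleR r' x)^n) \<le> 1/3" using g_bound1[OF ident[OF n0 b(3,4)]] by simp
      then show "norm ((scaleR r' x)^n) \<le> 1" by simp
    qed
  qed
  have Pk: "P (min R (real k * d/2))" for k
  proof (induction k)
    case 0 then show ?case using P0 R by (simp add: min_def)
  next
    case (Suc k)
    have "P (min R (min R (real k * d/2) + d/2))"
      using step[OF _ _ Suc] R d by (auto simp: min_def)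
    moreover have "min R (min R (real k * d/2) + d/2) = min R (real (Suc k) * d/2)"
      using d by (auto simp: min_def algebra_simps)
    ultimately show ?case by simp
  qed
  obtain k where k: "R \<le> real k * d/2"
  proof -
    obtain k where "2 * R / d \<le> real k" using real_arch_simple by blast
    then have "R \<le> real k * d / 2" using d by (simp add: field_simps)
    then show ?thesis using that by blast
  qed
  then have "P R" using Pk[of k] by (simp add: min_def)
  then show ?thesis unfolding P_def .
qed



lemma adj_power: "adj (h ^ n) = (adj h) ^ n" for h :: "'a::cstar_algebra"
proof (induction n)
  case (Suc n)
  have "adj (h ^ Suc n) = adj (h ^ n * h)" by (simp only: power_Suc2)
  also have "\<dots> = adj h * adj (h ^ n)" by (rule adj_mult)
  finally show ?case using Suc by simp
qed simp

lemma sa_pow2: "adj h = h \<Longrightarrow> norm (h ^ (2^k)) = norm h ^ (2^k)" for h :: "'a::cstar_algebra"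
proof (induction k)
  case (Suc k)
  have e: "h ^ (2 ^ Suc k) = h ^ (2^k) * h ^ (2^k)"
    by (metis mult_2 power_Suc power_add)
  have "adj (h ^ (2^k)) = h ^ (2^k)" using Suc.prems by (simp add: adj_power)
  then have "norm (h ^ (2 ^ Suc k)) = norm (h ^ (2^k)) * norm (h ^ (2^k))"
    using cstar_identity[of "h ^ (2^k)"] e by simp
  also have "\<dots> = norm h ^ (2 ^ Suc k)" using Suc by (metis mult_2 power_Suc power_add)
  finally show ?case .
qed simp

lemma neg_invertible: "cinvertible x \<Longrightarrow> cinvertible (- x)" for x :: "'a::cstar_algebra"
  using cinvertible_scaleC[of x "-1"] by (simp add: scaleC_minus_left scaleC_one)

lemma sa_norm_bound:
  fixes h :: "'a::cstar_algebra"
  assumes sa: "adj h = h" and rho: "\<rho> > 0"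
    and inv: "\<And>z. cmod z \<ge> \<rho> \<Longrightarrow> cinvertible (h - scaleC z 1)"
  shows "norm h \<le> \<rho>"
proof -
  have inv2: "cinvertible (1 - scaleC \<mu> h)" if "cmod \<mu> \<le> 1/\<rho>" for \<mu>
  proof (cases "\<mu> = 0")
    case True then show ?thesis by simp
  next
    case False
    have "cmod (1/\<mu>) \<ge> \<rho>" using that False rho by (simp add: norm_divide field_simps)
    then have "cinvertible (h - scaleC (1/\<mu>) 1)" by (rule inv)
    then have "cinvertible (scaleC (-\<mu>) (h - scaleC (1/\<mu>) 1))" using False by (intro cinvertible_scaleC) auto
    moreover have "scaleC (-\<mu>) (h - scaleC (1/\<mu>) 1) = 1 - scaleC \<mu> h"
      using False by (simp add: scaleC_diff_right scaleC_scaleC scaleC_minus_left scaleC_one)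
    ultimately show ?thesis by simp
  qed
  have "\<exists>N. \<forall>n\<ge>N. norm ((scaleR (1/\<rho>) h)^n) \<le> 1"
  proof (rule gelfand_core)
    show "1/\<rho> > 0" using rho by simp
    fix \<mu> :: complex assume "cmod \<mu> \<le> 1/\<rho>"
    then show "cinvertible (1 - scaleC \<mu> h)" by (rule inv2)
  qed
  then obtain N where N: "\<And>n. n \<ge> N \<Longrightarrow> norm ((scaleR (1/\<rho>) h)^n) \<le> 1"
    by blast
  define n :: nat where "n = 2 ^ N"
  have nN: "n \<ge> N" unfolding n_def by (rule less_imp_le[OF less_exp])
  have "(scaleR (1/\<rho>) h)^n = scaleR ((1/\<rho>)^n) (h^n)" by (rule scaleR_power)
  then have "norm ((scaleR (1/\<rho>) h)^n) = (1/\<rho>)^n * norm (h ^ n)"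
    using rho by simp
  also have "norm (h ^ n) = norm h ^ n" unfolding n_def by (rule sa_pow2[OF sa])
  finally have "(1/\<rho>)^n * norm h ^ n \<le> 1" using N[OF nN] by simp
  then have "\<rho>^n * ((1/\<rho>)^n * norm h ^ n) \<le> \<rho>^n * 1" using rho by (intro mult_left_mono) auto
  moreover have "\<rho>^n * ((1/\<rho>)^n * norm h ^ n) = norm h ^ n"
    using rho by (simp add: power_one_over)
  ultimately have hle: "norm h ^ n \<le> \<rho> ^ n" by simp
  have npos: "n > 0" unfolding n_def by simp
  show ?thesis using power_mono_iff[of "norm h" \<rho> n] rho npos hle by simp
qed



lemma sa_one: "adj (scaleR c 1) = scaleR c (1::'a::cstar_algebra)"
  by (simp add: adj_scaleR)

lemma bound_pos:
  fixes h :: "'a::cstar_algebra"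
  assumes sa: "adj h = h" and M: "norm h \<le> M"
  shows "pos (scaleR M 1 - h)" "pos (h + scaleR M 1)"
proof -
  show "pos (scaleR M 1 - h)"
  proof (subst posSA)
    show "adj (scaleR M 1 - h) = scaleR M 1 - h" by (simp add: adj_diff sa sa_one)
    show "\<forall>s>0. cinvertible (scaleR M 1 - h + scaleR s 1)"
    proof (intro allI impI)
      fix s :: real assume s: "s > 0"
      have "cinvertible (h - scaleC (complex_of_real (M + s)) 1)"
        using M s norm_ge_zero[of h] by (intro spec_bound) (simp del: of_real_add)
      then have "cinvertible (- (h - scaleC (complex_of_real (M + s)) 1))" by (rule neg_invertible)
      moreover have "- (h - scaleC (complex_of_real (M + s)) 1) = scaleR M 1 - h + scaleR s 1"
        by (simp add: scaleC_real scaleR_add_left scaleC_add_left)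
      ultimately show "cinvertible (scaleR M 1 - h + scaleR s 1)" by metis
    qed
  qed
  show "pos (h + scaleR M 1)"
  proof (subst posSA)
    show "adj (h + scaleR M 1) = h + scaleR M 1" by (simp add: adj_add sa sa_one)
    show "\<forall>s>0. cinvertible (h + scaleR M 1 + scaleR s 1)"
    proof (intro allI impI)
      fix s :: real assume s: "s > 0"
      have "cinvertible (h - scaleC (complex_of_real (- (M + s))) 1)"
      proof (rule spec_bound)
        have "cmod (complex_of_real (- (M + s))) = \<bar>- (M + s)\<bar>" by (rule norm_of_real)
        then show "norm h < cmod (complex_of_real (- (M + s)))" using M s norm_ge_zero[of h] by simp
      qed
      moreover have "h - scaleC (complex_of_real (- (M + s))) 1 = h + scaleR M 1 + scaleR s 1"
        by (simp only: scaleC_real) (simp add: scaleR_add_left scaleR_diff_left)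
      ultimately show "cinvertible (h + scaleR M 1 + scaleR s 1)" by metis
    qed
  qed
qed

lemma pos_norm_le:
  fixes h :: "'a::cstar_algebra"
  assumes sa: "adj h = h" and p: "pos h" and pM: "pos (scaleR M 1 - h)" and M: "M \<ge> 0"
  shows "norm h \<le> M"
proof -
  have "norm h \<le> \<rho>" if rho: "\<rho> > M" for \<rho>
  proof (rule sa_norm_bound[OF sa])
    show "\<rho> > 0" using rho M by simp
    fix z :: complex assume z: "cmod z \<ge> \<rho>"
    show "cinvertible (h - scaleC z 1)"
    proof (cases "Im z = 0")
      case False then show ?thesis by (rule real_spec[OF sa])
    next
      case True
      define r where "r = Re z"
      have zr: "z = complex_of_real r" using True unfolding r_def by (simp add: complex_eq_iff)
      have az: "\<bar>r\<bar> \<ge> \<rho>" using z cmod_eq_Re[OF True] unfolding r_def by simp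
      have zs: "scaleC z 1 = scaleR r (1::'a)" unfolding zr by (rule scaleC_real)
      show ?thesis
      proof (cases "r > 0")
        case True
        have saM: "adj (scaleR M 1 - h) = scaleR M 1 - h" by (simp add: adj_diff sa sa_one)
        have "cinvertible (scaleR M 1 - h + scaleR (r - M) 1)"
          using pM[unfolded posSA[OF saM]] True az rho by auto
        then have "cinvertible (- (scaleR M 1 - h + scaleR (r - M) 1))" by (rule neg_invertible)
        moreover have "- (scaleR M 1 - h + scaleR (r - M) 1) = h - scaleC z 1"
          unfolding zs by (simp add: scaleR_diff_left)
        ultimately show ?thesis by metis
      next
        case False
        have "- r > 0" using False az rho M by auto
        then have "cinvertible (h + scaleR (- r) 1)"
          using p[unfolded posSA[OF sa], rule_format, of "- r"] by simp
        moreover have "h + scaleR (- r) 1 = h - scaleC z 1"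
          unfolding zs by simp
        ultimately show ?thesis by metis
      qed
    qed
  qed
  then show ?thesis by (rule dense_ge)
qed

lemma NC1:
  fixes h :: "'a::cstar_algebra"
  assumes sa: "adj h = h" and p: "pos h"
  shows "norm (scaleR (norm h) 1 - h) \<le> norm h"
proof (rule pos_norm_le)
  show "adj (scaleR (norm h) 1 - h) = scaleR (norm h) 1 - h" by (simp add: adj_diff sa sa_one)
  show "pos (scaleR (norm h) 1 - h)" by (rule bound_pos(1)[OF sa]) simp
  show "pos (scaleR (norm h) 1 - (scaleR (norm h) 1 - h))" using p by simp
qed simp

lemma NC2:
  fixes h :: "'a::cstar_algebra"
  assumes sa: "adj h = h" and n: "norm (scaleR t 1 - h) \<le> t"
  shows "pos h"
proof (subst posSA[OF sa], intro allI impI)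
  fix s :: real assume s: "s > 0"
  have "cinvertible ((scaleR t 1 - h) - scaleC (complex_of_real (t + s)) 1)"
    using n s norm_ge_zero[of "scaleR t 1 - h"] by (intro spec_bound) (simp del: of_real_add)
  then have "cinvertible (- ((scaleR t 1 - h) - scaleC (complex_of_real (t + s)) 1))" by (rule neg_invertible)
  moreover have "- ((scaleR t 1 - h) - scaleC (complex_of_real (t + s)) 1) = h + scaleR s 1"
    by (simp add: scaleC_real scaleR_add_left scaleC_add_left)
  ultimately show "cinvertible (h + scaleR s 1)" by metis
qed

lemma pos_add:
  fixes a b :: "'a::cstar_algebra"
  assumes "adj a = a" "adj b = b" "pos a" "pos b"
  shows "pos (a + b)"
proof (rule NC2[where t = "norm a + norm b"])
  show "adj (a + b) = a + b" using assms by (simp add: adj_add)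
  have "scaleR (norm a + norm b) 1 - (a + b) = (scaleR (norm a) 1 - a) + (scaleR (norm b) 1 - b)"
    by (simp add: scaleR_add_left)
  then have "norm (scaleR (norm a + norm b) 1 - (a + b)) \<le> norm (scaleR (norm a) 1 - a) + norm (scaleR (norm b) 1 - b)"
    by (metis norm_triangle_ineq)
  also have "\<dots> \<le> norm a + norm b" using NC1[of a] NC1[of b] assms by simp
  finally show "norm (scaleR (norm a + norm b) 1 - (a + b)) \<le> norm a + norm b" .
qed

lemma pos_const: "c \<ge> 0 \<Longrightarrow> pos (scaleR c (1::'a::cstar_algebra))"
proof (subst posSA)
  assume c: "c \<ge> 0"
  show "adj (scaleR c 1) = scaleR c (1::'a)" by (rule sa_one)
  show "\<forall>s>0. cinvertible (scaleR c 1 + scaleR s (1::'a))"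
  proof (intro allI impI)
    fix s :: real assume "s > 0"
    then have "cinvertible (scaleC (complex_of_real (c + s)) (1::'a))"
      using c by (intro cinvertible_scaleC) (auto simp del: of_real_add)
    then show "cinvertible (scaleR c 1 + scaleR s (1::'a))" by (simp add: scaleC_real scaleR_add_left scaleC_add_left)
  qed
qed

lemma pos_scale:
  fixes a :: "'a::cstar_algebra"
  assumes sa: "adj a = a" and p: "pos a" and c: "c \<ge> 0"
  shows "pos (scaleR c a)"
proof (cases "c = 0")
  case True then show ?thesis using pos_const[of 0] by simp
next
  case False
  then have c0: "c > 0" using c by simp
  have sac: "adj (scaleR c a) = scaleR c a" by (simp add: adj_scaleR sa)
  show ?thesis
  proof (subst posSA[OF sac], intro allI impI)
    fix s :: real assume s: "s > 0"
    have "cinvertible (a + scaleR (s / c) 1)" using p[unfolded posSA[OF sa]] s c0 by auto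
    then have "cinvertible (scaleC (complex_of_real c) (a + scaleR (s / c) 1))" using c0 by (intro cinvertible_scaleC) auto
    then show "cinvertible (scaleR c a + scaleR s 1)" using c0 by (simp add: scaleC_real scaleR_add_right)
  qed
qed

lemma pos_inv_lower:
  fixes a :: "'a::cstar_algebra"
  assumes sa: "adj a = a" and p: "pos a" and inv: "cinvertible a"
  shows "pos (a - scaleR (1 / norm (cinv a)) 1)"
proof -
  define N where "N = norm (cinv a)"
  have N: "N > 0" unfolding N_def by (rule norm_cinv_pos[OF inv])
  have saN: "adj (a - scaleR (1/N) 1) = a - scaleR (1/N) 1" by (simp add: adj_diff sa sa_one)
  show ?thesis unfolding N_def[symmetric]
  proof (subst posSA[OF saN], intro allI impI)
    fix s :: real assume s: "s > 0"
    define l where "l = 1/N - s"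
    have eq: "a - scaleR (1/N) 1 + scaleR s 1 = a - scaleR l 1" unfolding l_def by (simp add: scaleR_diff_left)
    consider "l < 0" | "l = 0" | "l > 0" by linarith
    then show "cinvertible (a - scaleR (1/N) 1 + scaleR s 1)"
    proof cases
      case 1
      then have "cinvertible (a + scaleR (- l) 1)" using p[unfolded posSA[OF sa], rule_format, of "-l"] by simp
      then show ?thesis unfolding eq by simp
    next
      case 2 then show ?thesis unfolding eq using inv by simp
    next
      case 3
      have "norm (scaleR l (cinv a)) = l * N" using 3 unfolding N_def by simp
      also have "l * N = 1 - s * N" unfolding l_def using N by (simp add: field_simps)
      finally have "norm (scaleR l (cinv a)) < 1" using s N by simp
      then have "cinvertible (1 - scaleR l (cinv a))" by (rule neumann)
      then have "cinvertible (a * (1 - scaleR l (cinv a)))" using inv by (intro cinvertible_mult)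
      moreover have "a * (1 - scaleR l (cinv a)) = a - scaleR l 1"
        by (simp add: right_diff_distrib cinv_right[OF inv])
      ultimately show ?thesis unfolding eq by simp
    qed
  qed
qed

lemma pos_closure:
  fixes h :: "'a::cstar_algebra"
  assumes sa: "adj h = h" and e0: "e0 > 0" and H: "\<And>e. 0 < e \<Longrightarrow> e < e0 \<Longrightarrow> pos (h - scaleR e 1)"
  shows "pos h"
proof (subst posSA[OF sa], intro allI impI)
  fix s :: real assume s: "s > 0"
  define e where "e = min s e0 / 2"
  have e: "0 < e" "e < e0" "e < s" using s e0 unfolding e_def by auto
  have sae: "adj (h - scaleR e 1) = h - scaleR e 1" by (simp add: adj_diff sa sa_one)
  have "cinvertible (h - scaleR e 1 + scaleR (s + e) 1)"
    using H[OF e(1,2), unfolded posSA[OF sae]] e by auto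
  then show "cinvertible (h + scaleR s 1)" by (simp add: scaleR_add_left)
qed



lemma sa_cRe: "adj (cRe x) = cRe (x::'a::cstar_algebra)" by (rule adj_cRe)

lemma cinvertible_scaleR_rev:
  fixes a :: "'a::cstar_algebra"
  assumes i: "cinvertible (scaleR c a)" and c: "c \<noteq> 0"
  shows "cinvertible a" "cinv a = scaleR c (cinv (scaleR c a))"
proof -
  have 1: "scaleR c (cinv (scaleR c a)) * a = 1"
    using cinv_left[OF i] by (simp add: mult_scaleR_left mult_scaleR_right)
  have 2: "a * scaleR c (cinv (scaleR c a)) = 1"
    using cinv_right[OF i] by (simp add: mult_scaleR_left mult_scaleR_right)
  show "cinvertible a" by (rule cinvertibleI[OF 1 2])
  show "cinv a = scaleR c (cinv (scaleR c a))" by (rule cinv_unique[OF 1 2])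
qed

lemma acc_step:
  fixes T :: "'a::cstar_algebra"
  assumes p: "pos (cRe T - scaleR e 1)" and e': "0 < e'" "e' < e"
  shows "\<exists>\<tau>>0. \<tau> * e' < 1 \<and> norm (1 - scaleR \<tau> T) \<le> 1 - \<tau> * e'"
proof -
  define H where "H = cRe T"
  have saH: "adj H = H" unfolding H_def by (rule adj_cRe)
  define K where "K = norm H"
  define C where "C = norm T ^ 2"
  have K: "K \<ge> 0" and C: "C \<ge> 0" unfolding K_def C_def by auto
  define \<tau> where "\<tau> = min (min (1/(2*(K+1))) (1/(2*e))) ((e - e')/(C+1))"
  have e: "e > 0" using e' by simp
  have tpos: "\<tau> > 0" unfolding \<tau>_def using K C e e' by auto
  have t1: "\<tau> \<le> 1/(2*(K+1))" and t2: "\<tau> \<le> 1/(2*e)" and t3: "\<tau> \<le> (e - e')/(C+1)"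
    unfolding \<tau>_def by auto
  have tK: "2 * \<tau> * K \<le> 1"
  proof -
    have "2 * \<tau> * K \<le> 2 * (1/(2*(K+1))) * K" using t1 K by (intro mult_right_mono mult_left_mono) auto
    also have "\<dots> \<le> 1" using K by (simp add: field_simps)
    finally show ?thesis .
  qed
  have te: "2 * \<tau> * e \<le> 1" using t2 e by (simp add: field_simps)
  have tC: "\<tau> * (C + 1) \<le> e - e'" using t3 C by (simp add: field_simps)
  define h where "h = 1 - scaleR (2 * \<tau>) H"
  have sah: "adj h = h" unfolding h_def by (simp add: adj_diff adj_scaleR saH)
  have hpos: "pos h"
  proof -
    have "h = scaleR (1 - 2 * \<tau> * K) 1 + scaleR (2 * \<tau>) (scaleR K 1 - H)"
      unfolding h_def by (simp add: scaleR_diff_left scaleR_diff_right)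
    moreover have "pos (scaleR (1 - 2 * \<tau> * K) 1 + scaleR (2 * \<tau>) (scaleR K 1 - H))"
    proof (rule pos_add)
      show "adj (scaleR (1 - 2 * \<tau> * K) 1) = scaleR (1 - 2 * \<tau> * K) (1::'a)" by (rule sa_one)
      show "adj (scaleR (2 * \<tau>) (scaleR K 1 - H)) = scaleR (2 * \<tau>) (scaleR K 1 - H)"
        by (simp add: adj_scaleR adj_diff saH sa_one)
      show "pos (scaleR (1 - 2 * \<tau> * K) (1::'a))" using tK by (intro pos_const) simp
      show "pos (scaleR (2 * \<tau>) (scaleR K 1 - H))"
        using tpos bound_pos(1)[OF saH, of K] unfolding K_def
        by (intro pos_scale) (auto simp: adj_diff saH sa_one)
    qed
    ultimately show ?thesis by simp
  qed
  have hM: "pos (scaleR (1 - 2 * \<tau> * e) 1 - h)"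
  proof -
    have "scaleR (1 - 2 * \<tau> * e) 1 - h = scaleR (2 * \<tau>) (cRe T - scaleR e 1)"
      unfolding h_def H_def by (simp add: scaleR_diff_left scaleR_diff_right)
    moreover have "pos (scaleR (2 * \<tau>) (cRe T - scaleR e 1))"
      using p tpos by (intro pos_scale) (auto simp: adj_diff adj_cRe sa_one)
    ultimately show ?thesis by simp
  qed
  have hn: "norm h \<le> 1 - 2 * \<tau> * e"
    by (rule pos_norm_le[OF sah hpos hM]) (use te in simp)
  define D where "D = 1 - scaleR \<tau> T"
  have "adj D * D = h + scaleR (\<tau>^2) (adj T * T)"
    unfolding D_def h_def H_def cRe_def
    by (simp add: adj_diff adj_scaleR algebra_simps power2_eq_square scaleR_add_right)
  then have "norm D * norm D = norm (h + scaleR (\<tau>^2) (adj T * T))"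
    using cstar_identity[of D] by simp
  also have "\<dots> \<le> norm h + \<tau>^2 * norm (adj T * T)"
    by (rule order_trans[OF norm_triangle_ineq]) simp
  also have "norm (adj T * T) = C" unfolding C_def by (simp add: cstar_identity power2_eq_square)
  finally have "norm D * norm D \<le> norm h + \<tau>^2 * C" .
  also have "\<dots> \<le> 1 - 2 * \<tau> * e + \<tau>^2 * C" using hn by simp
  also have "\<dots> \<le> (1 - \<tau> * e')^2"
  proof -
    have "\<tau> * C \<le> e - e'" using tC tpos by (simp add: algebra_simps) 
    then have "\<tau> * (\<tau> * C) \<le> \<tau> * (2 * (e - e'))" using tpos e' by (intro mult_left_mono) auto
    moreover have "0 \<le> \<tau> * (\<tau> * (e' * e'))" by (intro mult_nonneg_nonneg) (use tpos e' in auto)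
    ultimately show ?thesis by (simp add: power2_eq_square algebra_simps)
  qed
  finally have sq: "norm D ^ 2 \<le> (1 - \<tau> * e')^2" by (simp add: power2_eq_square)
  have te': "\<tau> * e' < 1"
  proof -
    have "\<tau> * e' < \<tau> * e" using tpos e' by simp
    also have "\<dots> \<le> 1/2" using te by simp
    finally show ?thesis by simp
  qed
  have "norm D \<le> 1 - \<tau> * e'"
    by (rule power2_le_imp_le[OF sq]) (use te' in simp)
  then show ?thesis using tpos te' unfolding D_def by blast
qed

lemma accretive_inv:
  fixes T :: "'a::cstar_algebra"
  assumes p: "pos (cRe T - scaleR e 1)" and e: "e > 0"
  shows "cinvertible T" "norm (cinv T) \<le> 1/e"
proof -
  have main: "cinvertible T \<and> norm (cinv T) \<le> 1/e'" if e': "0 < e'" "e' < e" for e'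
  proof -
    obtain \<tau> where t: "\<tau> > 0" "\<tau> * e' < 1" and D: "norm (1 - scaleR \<tau> T) \<le> 1 - \<tau> * e'"
      using acc_step[OF p e'] by blast
    have "\<tau> * e' > 0" using t e' by simp
    then have Dl: "norm (1 - scaleR \<tau> T) < 1" using D by linarith
    have inv: "cinvertible (1 - (1 - scaleR \<tau> T))" using neumann(1)[OF Dl] .
    have nb: "norm (cinv (1 - (1 - scaleR \<tau> T))) \<le> 1 / (1 - norm (1 - scaleR \<tau> T))"
      using neumann(2)[OF Dl] .
    have inv': "cinvertible (scaleR \<tau> T)" using inv by simp
    have nb': "norm (cinv (scaleR \<tau> T)) \<le> 1 / (\<tau> * e')"
    proof -
      have "norm (cinv (scaleR \<tau> T)) \<le> 1 / (1 - norm (1 - scaleR \<tau> T))" using nb by simp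
      also have "\<dots> \<le> 1 / (\<tau> * e')"
        using D t e' Dl by (intro divide_left_mono) (auto intro!: mult_pos_pos)
      finally show ?thesis .
    qed
    have ti: "cinvertible T" and ceq: "cinv T = scaleR \<tau> (cinv (scaleR \<tau> T))"
      using cinvertible_scaleR_rev[OF inv'] t by auto
    have "norm (cinv T) = \<tau> * norm (cinv (scaleR \<tau> T))" using ceq t by simp
    also have "\<dots> \<le> \<tau> * (1 / (\<tau> * e'))" using nb' t by (intro mult_left_mono) auto
    also have "\<dots> = 1/e'" using t by simp
    finally show ?thesis using ti by simp
  qed
  show "cinvertible T" using main[of "e/2"] e by simp
  have "norm (cinv T) \<le> y" if y: "y > 1/e" for y
  proof -
    have y0: "y > 0" using y e by (smt (verit) divide_pos_pos)
    have "1/y < e" using y e y0 by (simp add: field_simps)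
    then show ?thesis using main[of "1/y"] y0 by simp
  qed
  then show "norm (cinv T) \<le> 1/e" by (rule dense_ge)
qed



lemma cRe_sa: "adj x = x \<Longrightarrow> cRe x = (x::'a::cstar_algebra)"
  by (simp add: cRe_def scaleR_add_right[symmetric] flip: scaleR_2)

lemma pos_closure2:
  fixes h :: "'a::cstar_algebra"
  assumes sa: "adj h = h" and e0: "e0 > 0" and H: "\<And>e. 0 < e \<Longrightarrow> e < e0 \<Longrightarrow> pos (h + scaleR e 1)"
  shows "pos h"
proof (subst posSA[OF sa], intro allI impI)
  fix s :: real assume s: "s > 0"
  define e where "e = min s e0 / 2"
  have e: "0 < e" "e < e0" "e < s" using s e0 unfolding e_def by auto
  have sae: "adj (h + scaleR e 1) = h + scaleR e 1" by (simp add: adj_add sa sa_one)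
  have "cinvertible (h + scaleR e 1 + scaleR (s - e) 1)"
    using H[OF e(1,2), unfolded posSA[OF sae]] e by auto
  then show "cinvertible (h + scaleR s 1)" by (simp add: scaleR_diff_left)
qed

lemma pos_step:
  fixes Q Q' :: "'a::cstar_algebra"
  assumes saQ: "adj Q = Q" and pQ: "pos Q" and iQ: "cinvertible Q" and K: "norm (cinv Q) \<le> K"
    and saQ': "adj Q' = Q'" and d: "norm (Q' - Q) \<le> 1/K"
  shows "pos Q'"
proof -
  define N where "N = norm (cinv Q)"
  have N: "N > 0" unfolding N_def by (rule norm_cinv_pos[OF iQ])
  have K0: "K > 0" using N K unfolding N_def by linarith
  have p1: "pos (Q - scaleR (1/N) 1)" unfolding N_def by (rule pos_inv_lower[OF saQ pQ iQ])
  have p2: "pos (scaleR (1/N - 1/K) (1::'a))"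
    using K N K0 unfolding N_def[symmetric] by (intro pos_const) (simp add: field_simps)
  have p3: "pos ((Q' - Q) + scaleR (1/K) 1)"
    by (rule bound_pos(2)) (use saQ saQ' d in \<open>simp_all add: adj_diff\<close>)
  have "pos ((Q - scaleR (1/N) 1) + scaleR (1/N - 1/K) 1 + ((Q' - Q) + scaleR (1/K) 1))"
    by (intro pos_add p1 p2 p3) (simp_all add: adj_add adj_diff saQ saQ' sa_one)
  moreover have "(Q - scaleR (1/N) 1) + scaleR (1/N - 1/K) 1 + ((Q' - Q) + scaleR (1/K) 1) = Q'"
    by (simp add: scaleR_diff_left)
  ultimately show ?thesis by simp
qed



lemma norm_mult3: "norm (a * b * c) \<le> norm a * norm b * norm (c::'a::cstar_algebra)"
proof -
  have "norm (a * b * c) \<le> norm (a * b) * norm c" by (rule norm_mult_ineq)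
  also have "\<dots> \<le> norm a * norm b * norm c" by (intro mult_right_mono norm_mult_ineq) auto
  finally show ?thesis .
qed

lemma conj_identity:
  fixes A :: "'a::cstar_algebra"
  assumes iA: "cinvertible A"
  shows "adj (cinv A) * (cRe A - scaleR c (adj A * A)) * cinv A = cRe (cinv A) - scaleR c 1"
proof -
  define B where "B = cinv A"
  have AB: "A * B = 1" and BA: "B * A = 1" unfolding B_def using cinv_left[OF iA] cinv_right[OF iA] by auto
  have BsAs: "adj B * adj A = 1" using AB by (metis adj_mult adj_one)
  have t1: "adj B * A * B = adj B" using AB by (simp add: mult.assoc)
  have t2: "adj B * adj A * B = B" using BsAs by simp
  have t3: "adj B * (adj A * A) * B = 1"
  proof -
    have "adj B * (adj A * A) * B = (adj B * adj A) * (A * B)" by (simp add: mult.assoc)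
    then show ?thesis using AB BsAs by simp
  qed
  have "adj B * (cRe A - scaleR c (adj A * A)) * B
      = scaleR (1/2) (adj B * A * B + adj B * adj A * B) - scaleR c (adj B * (adj A * A) * B)"
    unfolding cRe_def by (simp add: algebra_simps)
  also have "\<dots> = scaleR (1/2) (adj B + B) - scaleR c 1" using t1 t2 t3 by simp
  also have "\<dots> = cRe B - scaleR c 1" unfolding cRe_def by (simp add: add.commute)
  finally show ?thesis unfolding B_def .
qed

lemma cinvertible_cinv: "cinvertible a \<Longrightarrow> cinvertible (cinv a) \<and> cinv (cinv a) = (a::'a::cstar_algebra)"
  using cinvertibleI[of a "cinv a"] cinv_unique[of a "cinv a"] cinv_left cinv_right by metis



lemma re_inv_core:
  fixes A :: "'a::cstar_algebra"
  assumes pA: "pos (cRe A - scaleR \<delta> 1)" and \<delta>: "\<delta> > 0" and m: "norm A \<le> m"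
    and c': "0 < c'" "c' * m^2 < \<delta>"
  shows "pos (cRe (cinv A) - scaleR c' 1)"
proof -
  have iA: "cinvertible A" by (rule accretive_inv(1)[OF pA \<delta>])
  define P where "P = adj A * A"
  have saP: "adj P = P" unfolding P_def by (simp add: adj_mult adj_adj)
  have nP: "norm P \<le> m^2"
  proof -
    have "norm P = norm A ^ 2" unfolding P_def by (simp add: cstar_identity power2_eq_square)
    also have "\<dots> \<le> m^2" using m by (intro power_mono) auto
    finally show ?thesis .
  qed
  define X where "X = cRe A - scaleR c' P"
  have saX: "adj X = X" unfolding X_def by (simp add: adj_diff adj_scaleR adj_cRe saP)
  define \<eta> where "\<eta> = \<delta> - c' * m^2"
  have \<eta>: "\<eta> > 0" unfolding \<eta>_def using c' by simp
  have pX\<eta>: "pos (X - scaleR \<eta> 1)"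
  proof -
    have "X - scaleR \<eta> 1 = (cRe A - scaleR \<delta> 1) + scaleR c' (scaleR (m^2) 1 - P)"
      unfolding X_def \<eta>_def by (simp add: algebra_simps scaleR_diff_left scaleR_diff_right)
    moreover have "pos ((cRe A - scaleR \<delta> 1) + scaleR c' (scaleR (m^2) 1 - P))"
    proof (rule pos_add)
      show "adj (cRe A - scaleR \<delta> 1) = cRe A - scaleR \<delta> 1" by (simp add: adj_diff adj_cRe sa_one)
      show "adj (scaleR c' (scaleR (m^2) 1 - P)) = scaleR c' (scaleR (m^2) 1 - P)"
        by (simp add: adj_scaleR adj_diff saP sa_one)
      show "pos (cRe A - scaleR \<delta> 1)" by (rule pA)
      show "pos (scaleR c' (scaleR (m^2) 1 - P))"
        using bound_pos(1)[OF saP nP] c' by (intro pos_scale) (auto simp: adj_diff saP sa_one)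
    qed
    ultimately show ?thesis by simp
  qed
  have iX: "cinvertible X" and nX: "norm (cinv X) \<le> 1/\<eta>"
    using accretive_inv[of X \<eta>] pX\<eta> \<eta> cRe_sa[OF saX] by auto
  have pX: "pos X"
  proof -
    have "pos ((X - scaleR \<eta> 1) + scaleR \<eta> 1)"
      by (intro pos_add pX\<eta> pos_const) (use \<eta> in \<open>simp_all add: adj_diff saX sa_one\<close>)
    then show ?thesis by simp
  qed
  define \<mu> where "\<mu> = min 1 \<delta>"
  have \<mu>: "\<mu> > 0" "\<mu> \<le> 1" "\<mu> \<le> \<delta>" unfolding \<mu>_def using \<delta> by auto
  define At where "At t = scaleR (1 - t) 1 + scaleR t A" for t
  have pAt: "pos (cRe (At t) - scaleR \<mu> 1)" if t: "0 \<le> t" "t \<le> 1" for t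
  proof -
    have cA: "cRe (At t) = scaleR (1 - t) 1 + scaleR t (cRe A)" unfolding At_def by (simp only: cRe_add cRe_scaleR cRe_one)
    have "cRe (At t) - scaleR \<mu> 1 = scaleR ((1 - t) * (1 - \<mu>) + t * (\<delta> - \<mu>)) 1 + scaleR t (cRe A - scaleR \<delta> 1)"
      unfolding cA by (simp add: algebra_simps scaleR_diff_left scaleR_diff_right scaleR_add_left)
    moreover have "pos (scaleR ((1 - t) * (1 - \<mu>) + t * (\<delta> - \<mu>)) 1 + scaleR t (cRe A - scaleR \<delta> 1))"
    proof (rule pos_add)
      show "pos (scaleR ((1 - t) * (1 - \<mu>) + t * (\<delta> - \<mu>)) (1::'a))"
        using t \<mu> by (intro pos_const) simp
      show "pos (scaleR t (cRe A - scaleR \<delta> 1))"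
        using pA t by (intro pos_scale) (auto simp: adj_diff adj_cRe sa_one)
    qed (simp_all add: adj_scaleR adj_diff adj_cRe sa_one)
    ultimately show ?thesis by simp
  qed
  have iAt: "cinvertible (At t)" and nBt: "norm (cinv (At t)) \<le> 1/\<mu>" if "0 \<le> t" "t \<le> 1" for t
    using accretive_inv[OF pAt[OF that] \<mu>(1)] by auto
  have nAt: "norm (At t) \<le> 1 + norm A" if t: "0 \<le> t" "t \<le> 1" for t
  proof -
    have "norm (At t) \<le> norm (scaleR (1 - t) (1::'a)) + norm (scaleR t A)"
      unfolding At_def by (rule norm_triangle_ineq)
    also have "\<dots> = (1 - t) + t * norm A" using t by simp
    also have "\<dots> \<le> 1 + norm A" using t by (smt (verit) mult_left_le_one_le norm_ge_zero)
    finally show ?thesis .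
  qed
  define Bt where "Bt t = cinv (At t)" for t
  define Q where "Q t = adj (Bt t) * X * Bt t" for t
  have saQ: "adj (Q t) = Q t" for t unfolding Q_def by (simp add: adj_mult adj_adj saX mult.assoc)
  define K where "K = (1 + norm A)^2 / \<eta>"
  have iQ: "cinvertible (Q t)" and nQ: "norm (cinv (Q t)) \<le> K" if t: "0 \<le> t" "t \<le> 1" for t
  proof -
    have iB: "cinvertible (Bt t)" and BB: "cinv (Bt t) = At t"
      unfolding Bt_def using cinvertible_cinv[OF iAt[OF t]] by auto
    have iaB: "cinvertible (adj (Bt t))" and aBB: "cinv (adj (Bt t)) = adj (At t)"
      using cinvertible_adj[OF iB] BB by auto
    have i1: "cinvertible (adj (Bt t) * X)" and c1: "cinv (adj (Bt t) * X) = cinv X * adj (At t)"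
      using cinvertible_mult[OF iaB iX] aBB by auto
    show iq: "cinvertible (Q t)" unfolding Q_def using cinvertible_mult[OF i1 iB] by simp
    have "cinv (Q t) = At t * (cinv X * adj (At t))"
      unfolding Q_def using cinvertible_mult[OF i1 iB] c1 BB by simp
    then have "norm (cinv (Q t)) \<le> norm (At t) * norm (cinv X) * norm (adj (At t))"
      using norm_mult3[of "At t" "cinv X" "adj (At t)"] by (simp add: mult.assoc)
    also have "\<dots> \<le> (1 + norm A) * (1/\<eta>) * (1 + norm A)"
      using nAt[OF t] nX \<eta> by (intro mult_mono) (auto intro: divide_nonneg_pos add_nonneg_nonneg)
    also have "\<dots> = K" unfolding K_def by (simp add: power2_eq_square)
    finally show "norm (cinv (Q t)) \<le> K" .
  qed
  define L where "L = 2 * norm X * (1/\<mu>)^3 * norm (A - 1)"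
  have L0: "L \<ge> 0" unfolding L_def using \<mu> by simp
  have lip: "norm (Q t - Q s) \<le> L * \<bar>t - s\<bar>" if t: "0 \<le> t" "t \<le> 1" and s: "0 \<le> s" "s \<le> 1" for t s
  proof -
    have dA: "At s - At t = scaleR (s - t) (A - 1)" unfolding At_def by (simp add: algebra_simps scaleR_diff_left scaleR_diff_right)
    have dB: "Bt t - Bt s = Bt t * (At s - At t) * Bt s"
      unfolding Bt_def by (rule cinv_diff[OF iAt[OF s] iAt[OF t]])
    have nbt: "norm (Bt t) \<le> 1/\<mu>" "norm (Bt s) \<le> 1/\<mu>" unfolding Bt_def using nBt t s by auto
    have ndB: "norm (Bt t - Bt s) \<le> (1/\<mu>)^2 * (\<bar>t - s\<bar> * norm (A - 1))"
    proof -
      have "norm (Bt t - Bt s) \<le> norm (Bt t) * norm (At s - At t) * norm (Bt s)"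
        unfolding dB by (rule norm_mult3)
      also have "\<dots> \<le> (1/\<mu>) * (\<bar>t - s\<bar> * norm (A - 1)) * (1/\<mu>)"
        using nbt \<mu> by (intro mult_mono) (auto simp: dA abs_minus_commute)
      finally show ?thesis by (simp add: power2_eq_square algebra_simps)
    qed
    have "Q t - Q s = adj (Bt t - Bt s) * X * Bt t + adj (Bt s) * X * (Bt t - Bt s)"
      unfolding Q_def by (simp add: adj_diff algebra_simps)
    then have "norm (Q t - Q s) \<le> norm (adj (Bt t - Bt s) * X * Bt t) + norm (adj (Bt s) * X * (Bt t - Bt s))"
      by (metis norm_triangle_ineq)
    also have "\<dots> \<le> norm (Bt t - Bt s) * norm X * (1/\<mu>) + (1/\<mu>) * norm X * norm (Bt t - Bt s)"
    proof (rule add_mono)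
      show "norm (adj (Bt t - Bt s) * X * Bt t) \<le> norm (Bt t - Bt s) * norm X * (1/\<mu>)"
        using norm_mult3[of "adj (Bt t - Bt s)" X "Bt t"] nbt(1)
        by (smt (verit) mult_left_mono mult_nonneg_nonneg norm_adj norm_ge_zero)
      show "norm (adj (Bt s) * X * (Bt t - Bt s)) \<le> (1/\<mu>) * norm X * norm (Bt t - Bt s)"
        using norm_mult3[of "adj (Bt s)" X "Bt t - Bt s"] nbt(2)
        by (smt (verit) mult_right_mono mult_nonneg_nonneg norm_adj norm_ge_zero)
    qed
    also have "\<dots> = 2 * norm X * (1/\<mu>) * norm (Bt t - Bt s)" by (simp add: algebra_simps)
    also have "\<dots> \<le> 2 * norm X * (1/\<mu>) * ((1/\<mu>)^2 * (\<bar>t - s\<bar> * norm (A - 1)))"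
      using ndB \<mu> by (intro mult_left_mono) auto
    also have "\<dots> = L * \<bar>t - s\<bar>" unfolding L_def by (simp add: power3_eq_cube power2_eq_square algebra_simps)
    finally show ?thesis .
  qed
  have "(1 + norm A)^2 > 0" using norm_ge_zero[of A] by (intro zero_less_power) linarith
  then have K0: "K > 0" unfolding K_def using \<eta> by simp
  obtain n0 :: nat where n0: "n0 \<ge> 1" "L * K \<le> real n0"
  proof -
    obtain n where "L * K \<le> real n" using real_arch_simple by blast
    then show ?thesis using that[of "max 1 n"] by (simp add: le_max_iff_disj)
  qed
  have Q0: "Q 0 = X" unfolding Q_def Bt_def At_def by simp
  have indk: "pos (Q (real k / real n0))" if "k \<le> n0" for k
    using that
  proof (induction k)
    case 0 then show ?case using Q0 pX by simp
  next
    case (Suc k)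
    have tk: "0 \<le> real k / real n0" "real k / real n0 \<le> 1" using Suc.prems n0 by auto
    have tk1: "0 \<le> real (Suc k) / real n0" "real (Suc k) / real n0 \<le> 1" using Suc.prems n0 by auto
    have IH: "pos (Q (real k / real n0))" using Suc by simp
    have "norm (Q (real (Suc k) / real n0) - Q (real k / real n0)) \<le> L * \<bar>real (Suc k) / real n0 - real k / real n0\<bar>"
      by (rule lip[OF tk1 tk])
    also have "\<bar>real (Suc k) / real n0 - real k / real n0\<bar> = 1 / real n0"
      using n0 by (simp add: field_simps)
    also have "L * (1 / real n0) \<le> 1 / K" using n0 K0 L0 by (simp add: field_simps)
    finally have d: "norm (Q (real (Suc k) / real n0) - Q (real k / real n0)) \<le> 1/K" .
    show ?case by (rule pos_step[OF saQ IH iQ[OF tk] nQ[OF tk] saQ d])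
  qed
  have "pos (Q 1)" using indk[of n0] n0 by simp
  moreover have "Q 1 = cRe (cinv A) - scaleR c' 1"
    unfolding Q_def Bt_def At_def X_def P_def using conj_identity[OF iA, of c'] by simp
  ultimately show ?thesis by simp
qed



lemma re_inv_lower:
  fixes A :: "'a::cstar_algebra"
  assumes pA: "pos (cRe A - scaleR \<delta> 1)" and \<delta>: "\<delta> > 0" and m: "norm A \<le> m" and m0: "m > 0"
  shows "pos (cRe (cinv A) - scaleR (\<delta> / m^2) 1)"
proof (rule pos_closure2[of _ "\<delta> / m^2"])
  show "adj (cRe (cinv A) - scaleR (\<delta> / m^2) 1) = cRe (cinv A) - scaleR (\<delta> / m^2) 1"
    by (simp add: adj_diff adj_cRe sa_one)
  show "\<delta> / m^2 > 0" using \<delta> m0 by simp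
  fix e assume e: "0 < e" "e < \<delta> / m^2"
  have c1: "0 < \<delta> / m^2 - e" using e by simp
  have c2: "(\<delta> / m^2 - e) * m^2 < \<delta>" using e m0 by (simp add: algebra_simps)
  have "pos (cRe (cinv A) - scaleR (\<delta> / m^2 - e) 1)" by (rule re_inv_core[OF pA \<delta> m c1 c2])
  then show "pos (cRe (cinv A) - scaleR (\<delta> / m^2) 1 + scaleR e 1)"
    by (simp add: scaleR_diff_left algebra_simps)
qed

lemma cinv_has_derivative:
  fixes a :: "'a::cstar_algebra"
  assumes a: "cinvertible a"
  shows "(cinv has_derivative (\<lambda>h. - (cinv a * h * cinv a))) (at a)"
  unfolding has_derivative_iff_norm
proof
  show "bounded_linear (\<lambda>h. - (cinv a * h * cinv a))"
    by (intro bounded_linear_minus bounded_linear_mult_const bounded_linear_const_mult bounded_linear_ident)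
  define C where "C = norm (cinv a)"
  have C: "C > 0" unfolding C_def using norm_cinv_pos[OF a] .
  have ev: "eventually (\<lambda>y. norm (norm (cinv y - cinv a - - (cinv a * (y - a) * cinv a)) / norm (y - a))
      \<le> C * norm (cinv y - cinv a)) (at a)"
    unfolding eventually_at
  proof (intro exI[of _ "1/(2*C)"] conjI ballI impI)
    show "0 < 1/(2*C)" using C by simp
    fix y assume "y \<in> UNIV" and y: "y \<noteq> a \<and> dist y a < 1 / (2 * C)"
    then have "norm (y - a) * C \<le> 1/2" using C by (simp add: dist_norm field_simps)
    then have iy: "cinvertible y" using inv_close(1)[OF a] unfolding C_def by auto
    have ya: "norm (y - a) > 0" using y by simp
    have "cinv y - cinv a - - (cinv a * (y - a) * cinv a) = (cinv a - cinv y) * (y - a) * cinv a"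
      using cinv_diff[OF a iy] by (simp add: algebra_simps)
    then have "norm (cinv y - cinv a - - (cinv a * (y - a) * cinv a)) \<le> norm (cinv a - cinv y) * norm (y - a) * C"
      unfolding C_def by (metis norm_mult3)
    then have "norm (cinv y - cinv a - - (cinv a * (y - a) * cinv a)) / norm (y - a) \<le> C * norm (cinv y - cinv a)"
      using ya by (simp add: field_simps norm_minus_commute)
    then show "norm (norm (cinv y - cinv a - - (cinv a * (y - a) * cinv a)) / norm (y - a))
      \<le> C * norm (cinv y - cinv a)" by simp
  qed
  have "((\<lambda>y. cinv y - cinv a) \<longlongrightarrow> 0) (at a)"
    using isCont_cinv[OF a] unfolding isCont_def by (simp add: Lim_null[symmetric])
  then have lim: "((\<lambda>y. C * norm (cinv y - cinv a)) \<longlongrightarrow> 0) (at a)"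
    by (intro tendsto_mult_right_zero tendsto_norm_zero)
  show "((\<lambda>y. norm (cinv y - cinv a - - (cinv a * (y - a) * cinv a)) / norm (y - a)) \<longlongrightarrow> 0) (at a)"
    by (rule Lim_null_comparison[OF ev lim])
qed



lemma cpos_iff: "W \<in> cpos \<longleftrightarrow> (\<exists>\<epsilon>>0. pos (cRe W - scaleR \<epsilon> 1))"
  by (simp add: cpos_def cge_pos)

lemma cpos_pos_Re: "W \<in> cpos \<Longrightarrow> pos (cRe W)"
proof -
  assume "W \<in> cpos"
  then obtain e where e: "e > 0" "pos (cRe W - scaleR e 1)" unfolding cpos_iff by blast
  have "pos ((cRe W - scaleR e 1) + scaleR e 1)"
    by (intro pos_add e(2) pos_const) (use e in \<open>simp_all add: adj_diff adj_cRe sa_one\<close>)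
  then show ?thesis by simp
qed

theorem mainTheorem3:
  fixes \<eta> :: "'a::cstar_algebra \<Rightarrow> 'a" and V :: 'a and b :: real
  assumes eta_maps: "\<forall>W\<in>cpos. \<eta> W \<in> cpos"
    and eta_holo: "cholomorphic_on \<eta> cpos"
    and eta_bdd: "\<forall>r>0. \<exists>M. \<forall>W\<in>cpos. norm W \<le> r \<longrightarrow> norm (\<eta> W) \<le> M"
    and V_pos: "V \<in> cpos"
    and b_gt: "b > norm (cinv (cRe V))"
  defines "R \<equiv> {W \<in> cpos. norm W < b}"
    and "F \<equiv> (\<lambda>W. cinv (V + \<eta> W))"
    and "m \<equiv> norm V + Sup {norm (\<eta> W') | W'. W' \<in> cpos \<and> norm W' \<le> b}"
  shows "(\<forall>W\<in>R. cinvertible (V + \<eta> W))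
    \<and> (\<forall>W\<in>R. F W \<in> R)
    \<and> cholomorphic_on F R
    \<and> (\<exists>M. \<forall>W\<in>R. norm (F W) \<le> M)
    \<and> (\<exists>\<epsilon>>0. \<forall>W\<in>R. ball (F W) \<epsilon> \<subseteq> R)
    \<and> (\<forall>W\<in>R. cge (cRe (F W)) (scaleR (1 / (m\<^sup>2 * norm (cinv (cRe V)))) 1))"
proof -
  define n where "n = norm (cinv (cRe V))"
  obtain eV where eV: "eV > 0" "pos (cRe V - scaleR eV 1)" using V_pos unfolding cpos_iff by blast
  have saRV: "adj (cRe V) = cRe V" by (rule adj_cRe)
  have iRV: "cinvertible (cRe V)"
    using accretive_inv(1)[of "cRe V" eV] eV cRe_sa[OF saRV] by simp
  have n0: "n > 0" unfolding n_def by (rule norm_cinv_pos[OF iRV])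
  have pRV: "pos (cRe V - scaleR (1/n) 1)"
    unfolding n_def by (rule pos_inv_lower[OF saRV cpos_pos_Re[OF V_pos] iRV])
  have b0: "b > 0" using b_gt n0 unfolding n_def by linarith
  define S where "S = {norm (\<eta> W') | W'. W' \<in> cpos \<and> norm W' \<le> b}"
  have bddS: "bdd_above S"
  proof -
    obtain M where "\<forall>W\<in>cpos. norm W \<le> b \<longrightarrow> norm (\<eta> W) \<le> M" using eta_bdd b0 by blast
    then show ?thesis unfolding S_def bdd_above_def by blast
  qed
  have mdef: "m = norm V + Sup S" unfolding m_def S_def ..
  have key: "cinvertible (V + \<eta> W) \<and> norm (cinv (V + \<eta> W)) \<le> n \<and> norm (V + \<eta> W) \<le> m \<and> m > 0
      \<and> pos (cRe (cinv (V + \<eta> W)) - scaleR (1 / (m^2 * n)) 1)" if W: "W \<in> R" for W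
  proof -
    have Wc: "W \<in> cpos" and Wb: "norm W < b" using W unfolding R_def by auto
    have pE: "pos (cRe (\<eta> W))" using cpos_pos_Re eta_maps Wc by blast
    define A where "A = V + \<eta> W"
    have pA: "pos (cRe A - scaleR (1/n) 1)"
    proof -
      have "pos ((cRe V - scaleR (1/n) 1) + cRe (\<eta> W))"
        by (intro pos_add pRV pE) (simp_all add: adj_diff adj_cRe sa_one)
      then show ?thesis unfolding A_def by (simp add: cRe_add algebra_simps)
    qed
    have iA: "cinvertible A" and nA: "norm (cinv A) \<le> n"
      using accretive_inv[OF pA] n0 by auto
    have "norm (\<eta> W) \<in> S" unfolding S_def using Wc Wb by auto
    then have "norm (\<eta> W) \<le> Sup S" by (rule cSup_upper[OF _ bddS])
    then have mA: "norm A \<le> m" unfolding mdef A_def by (metis add_left_mono norm_triangle_le)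
    have "A \<noteq> 0" using cinv_left[OF iA] by auto
    then have m0: "m > 0" using mA zero_less_norm_iff[of A] by linarith
    have "pos (cRe (cinv A) - scaleR ((1/n) / m^2) 1)"
      by (rule re_inv_lower[OF pA _ mA m0]) (use n0 in simp)
    moreover have "(1/n) / m^2 = 1 / (m^2 * n)" by (simp add: mult.commute)
    ultimately show ?thesis using iA nA mA m0 unfolding A_def by (simp only:)
  qed
  have part1: "\<forall>W\<in>R. cinvertible (V + \<eta> W)" using key by blast
  have part6: "\<forall>W\<in>R. cge (cRe (F W)) (scaleR (1 / (m\<^sup>2 * norm (cinv (cRe V)))) 1)"
    using key unfolding F_def cge_pos n_def by blast
  have part4: "\<exists>M. \<forall>W\<in>R. norm (F W) \<le> M" using key unfolding F_def by blast
  have part5: "\<exists>\<epsilon>>0. \<forall>W\<in>R. ball (F W) \<epsilon> \<subseteq> R"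
  proof (cases "R = {}")
    case True then show ?thesis by (intro exI[of _ 1]) auto
  next
    case False
    then obtain W0 where "W0 \<in> R" by blast
    then have m0: "m > 0" using key by blast
    define c where "c = 1 / (m^2 * n)"
    have c0: "c > 0" unfolding c_def using m0 n0 by simp
    define \<epsilon> where "\<epsilon> = min (b - n) (c/2)"
    have e0: "\<epsilon> > 0" unfolding \<epsilon>_def using b_gt c0 unfolding n_def by simp
    show ?thesis
    proof (intro exI[of _ \<epsilon>] conjI ballI subsetI e0)
      fix W Y assume W: "W \<in> R" and Y: "Y \<in> ball (F W) \<epsilon>"
      have dY: "norm (Y - F W) < \<epsilon>" using Y by (simp add: dist_norm norm_minus_commute)
      have kW: "norm (F W) \<le> n" "pos (cRe (F W) - scaleR c 1)" using key[OF W] unfolding F_def c_def by auto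
      have "norm Y \<le> norm (F W) + norm (Y - F W)" by (metis add.commute diff_add_cancel norm_triangle_ineq)
      also have "\<dots> < n + (b - n)" using kW dY unfolding \<epsilon>_def by linarith
      finally have nY: "norm Y < b" by simp
      have "pos (cRe Y - scaleR (c/2) 1)"
      proof -
        define d where "d = cRe (Y - F W)"
        have sad: "adj d = d" unfolding d_def by (rule adj_cRe)
        have nd: "norm d \<le> c/2"
          using norm_cRe_le[of "Y - F W"] dY unfolding d_def \<epsilon>_def by linarith
        have "pos ((cRe (F W) - scaleR c 1) + (d + scaleR (c/2) 1))"
          by (intro pos_add kW(2) bound_pos(2)[OF sad nd]) (simp_all add: adj_diff adj_add adj_cRe sad sa_one)
        moreover have "(cRe (F W) - scaleR c 1) + (d + scaleR (c/2) 1) = cRe Y - scaleR (c/2) 1"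
          unfolding d_def by (simp add: cRe_diff algebra_simps scaleR_diff_left flip: scaleR_add_left)
        ultimately show ?thesis by simp
      qed
      then have "Y \<in> cpos" unfolding cpos_iff using c0 by (intro exI[of _ "c/2"]) simp
      then show "Y \<in> R" unfolding R_def using nY by simp
    qed
  qed
  have part2: "\<forall>W\<in>R. F W \<in> R"
  proof
    fix W assume W: "W \<in> R"
    have k: "norm (F W) \<le> n" "pos (cRe (F W) - scaleR (1 / (m^2 * n)) 1)" "m > 0"
      using key[OF W] unfolding F_def by auto
    have "1 / (m^2 * n) > 0" using k(3) n0 by simp
    then have "F W \<in> cpos" unfolding cpos_iff using k(2) by blast
    moreover have "norm (F W) < b" using k(1) b_gt unfolding n_def by simp
    ultimately show "F W \<in> R" unfolding R_def by simp
  qed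
  have part3: "cholomorphic_on F R"
    unfolding cholomorphic_on_def
  proof
    fix W assume W: "W \<in> R"
    then have Wc: "W \<in> cpos" unfolding R_def by simp
    obtain L where L: "(\<eta> has_derivative L) (at W)" and Lc: "\<forall>c y. L (scaleC c y) = scaleC c (L y)"
      using eta_holo Wc unfolding cholomorphic_on_def by blast
    define c where "c = cinv (V + \<eta> W)"
    have iA: "cinvertible (V + \<eta> W)" using key[OF W] by blast
    have d1: "((\<lambda>W. V + \<eta> W) has_derivative (\<lambda>h. 0 + L h)) (at W)"
      by (intro has_derivative_add has_derivative_const L)
    have d2: "(cinv has_derivative (\<lambda>h. - (c * h * c))) (at (V + \<eta> W))"
      unfolding c_def by (rule cinv_has_derivative[OF iA])
    have "((cinv \<circ> (\<lambda>W. V + \<eta> W)) has_derivative ((\<lambda>h. - (c * h * c)) \<circ> (\<lambda>h. 0 + L h))) (at W)"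
      using diff_chain_at[OF d1] d2 by simp
    then have "(F has_derivative (\<lambda>h. - (c * L h * c))) (at W)"
      unfolding F_def by (simp add: o_def)
    moreover have "\<forall>c' y. - (c * L (scaleC c' y) * c) = scaleC c' (- (c * L y * c))"
    proof (intro allI)
      fix c' y
      have "c * scaleC c' (L y) * c = scaleC c' (c * L y * c)"
        by (metis scaleC_mult_left scaleC_mult_right)
      then show "- (c * L (scaleC c' y) * c) = scaleC c' (- (c * L y * c))"
        using Lc by (simp add: scaleC_minus_right)
    qed
    ultimately show "\<exists>L. (F has_derivative L) (at W) \<and> (\<forall>c y. L (scaleC c y) = scaleC c (L y))"
      by blast
  qed
  show ?thesis using part1 part2 part3 part4 part5 part6 by blast
qed


end
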